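(* Let $K$ be a multiplicative Lie algebra and $p:K\to K/\mathcal Z(K)$ the natural projection, $p'=p|_{{}^M[K,K]}$. Then there exists a homomorphism $\Delta:\tilde M(K/\mathcal Z(K))\to{}^M[K,K]$ such that the sequence $$1\to\ker\Delta\to\tilde M(K/\mathcal Z(K))\xrightarrow{\Delta}{}^M[K,K]\xrightarrow{p'}{}^M\big[K/\mathcal Z(K),K/\mathcal Z(K)\big]\to1$$ is exact.
   Context: A multiplicative Lie algebra is a group $(G,\cdot)$ with a binary operation $\star$ such that for all $x,y,z\in G$: $x\star x=1$; $x\star(yz)=(x\star y)\,{}^y(x\star z)$; $(xy)\star z={}^x(y\star z)(x\star z)$; $((x\star y)\star{}^yz)((y\star z)\star{}^zx)((z\star x)\star{}^xy)=1$; ${}^z(x\star y)={}^zx\star{}^zy$, where ${}^xy=xyx^{-1}$. $Z(G)$ is the group center, $LZ(G)=\{x: x\star y=1\ \forall y\}$, $\mathcal Z(G)=LZ(G)\cap Z(G)$; $[x,y]$ is the group commutator. For ideals $A,B$ of $G$, ${}^M[A,B]=(A\star B)[A,B]$, where $A\star B$ is generated by all $a\star b$ ($a\in A,b\in B$); in particular ${}^M[G,G]=(G\star G)[G,G]$. The Schur multiplier of a multiplicative Lie algebra $Q$ is $\tilde M(Q)=({}^M[F,F]\cap R)/{}^M[R,F]$ for any free presentation $1\to R\to F\to Q\to1$ ($F$ a free multiplicative Lie algebra); it is independent of the presentation up to isomorphism. *)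

theory Defs
  imports "HOL-Algebra.Algebra"
begin

record 'a mul_lie = "'a monoid" +
  lstar :: "'a \<Rightarrow> 'a \<Rightarrow> 'a"

definition conjg :: "'a mul_lie \<Rightarrow> 'a \<Rightarrow> 'a \<Rightarrow> 'a" where
  "conjg G x y = x \<otimes>\<^bsub>G\<^esub> y \<otimes>\<^bsub>G\<^esub> inv\<^bsub>G\<^esub> x"

definition gcomm :: "'a mul_lie \<Rightarrow> 'a \<Rightarrow> 'a \<Rightarrow> 'a" where
  "gcomm G x y = x \<otimes>\<^bsub>G\<^esub> y \<otimes>\<^bsub>G\<^esub> inv\<^bsub>G\<^esub> x \<otimes>\<^bsub>G\<^esub> inv\<^bsub>G\<^esub> y"

definition mult_lie_alg :: "'a mul_lie \<Rightarrow> bool" where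
  "mult_lie_alg G \<longleftrightarrow> group G \<and>
    (\<forall>x\<in>carrier G. \<forall>y\<in>carrier G. lstar G x y \<in> carrier G) \<and>
    (\<forall>x\<in>carrier G. lstar G x x = \<one>\<^bsub>G\<^esub>) \<and>
    (\<forall>x\<in>carrier G. \<forall>y\<in>carrier G. \<forall>z\<in>carrier G.
       lstar G x (y \<otimes>\<^bsub>G\<^esub> z) = lstar G x y \<otimes>\<^bsub>G\<^esub> conjg G y (lstar G x z)) \<and>
    (\<forall>x\<in>carrier G. \<forall>y\<in>carrier G. \<forall>z\<in>carrier G.
       lstar G (x \<otimes>\<^bsub>G\<^esub> y) z = conjg G x (lstar G y z) \<otimes>\<^bsub>G\<^esub> lstar G x z) \<and>
    (\<forall>x\<in>carrier G. \<forall>y\<in>carrier G. \<forall>z\<in>carrier G.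
       lstar G (lstar G x y) (conjg G y z) \<otimes>\<^bsub>G\<^esub> lstar G (lstar G y z) (conjg G z x)
         \<otimes>\<^bsub>G\<^esub> lstar G (lstar G z x) (conjg G x y) = \<one>\<^bsub>G\<^esub>) \<and>
    (\<forall>x\<in>carrier G. \<forall>y\<in>carrier G. \<forall>z\<in>carrier G.
       conjg G z (lstar G x y) = lstar G (conjg G z x) (conjg G z y))"

text \<open>Group centre Z(G), Lie centre LZ(G), and their intersection (the paper's calligraphic Z).\<close>
definition grp_center :: "'a mul_lie \<Rightarrow> 'a set" where
  "grp_center G = {x \<in> carrier G. \<forall>y\<in>carrier G. x \<otimes>\<^bsub>G\<^esub> y = y \<otimes>\<^bsub>G\<^esub> x}"

definition lie_center :: "'a mul_lie \<Rightarrow> 'a set" where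
  "lie_center G = {x \<in> carrier G. \<forall>y\<in>carrier G. lstar G x y = \<one>\<^bsub>G\<^esub>}"

definition mla_center :: "'a mul_lie \<Rightarrow> 'a set" where
  "mla_center G = lie_center G \<inter> grp_center G"

definition Mcomm :: "'a mul_lie \<Rightarrow> 'a set \<Rightarrow> 'a set \<Rightarrow> 'a set" where
  "Mcomm G A B = generate G ({lstar G a b | a b. a \<in> A \<and> b \<in> B} \<union>
                             {gcomm G a b | a b. a \<in> A \<and> b \<in> B})"

definition mla_hom :: "'a mul_lie \<Rightarrow> 'b mul_lie \<Rightarrow> ('a \<Rightarrow> 'b) set" where
  "mla_hom G H = {h \<in> hom G H. \<forall>x\<in>carrier G. \<forall>y\<in>carrier G.
                    h (lstar G x y) = lstar H (h x) (h y)}"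

definition quot_mla :: "'a mul_lie \<Rightarrow> 'a set \<Rightarrow> 'a set mul_lie" where
  "quot_mla G N = \<lparr> carrier = rcosets\<^bsub>G\<^esub> N, monoid.mult = set_mult G, one = N,
     lstar = (\<lambda>A B. N #>\<^bsub>G\<^esub> lstar G (SOME a. a \<in> A) (SOME b. b \<in> B)) \<rparr>"

text \<open>Free multiplicative Lie algebra F on B \<subseteq> carrier F, via the universal property
  (targets range over multiplicative Lie algebras whose carrier lives in the element type
  of F).\<close>
definition free_mla :: "'a mul_lie \<Rightarrow> 'a set \<Rightarrow> bool" where
  "free_mla F B \<longleftrightarrow> mult_lie_alg F \<and> B \<subseteq> carrier F \<and>
    (\<forall>T :: 'a mul_lie. \<forall>f. mult_lie_alg T \<and> (\<forall>x\<in>B. f x \<in> carrier T) \<longrightarrow>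
       (\<exists>h \<in> mla_hom F T. \<forall>x\<in>B. h x = f x) \<and>
       (\<forall>h1 \<in> mla_hom F T. \<forall>h2 \<in> mla_hom F T.
          (\<forall>x\<in>B. h1 x = h2 x) \<longrightarrow> (\<forall>y\<in>carrier F. h1 y = h2 y)))"

text \<open>The group (M[F,F] \<inter> R) / M[R,F] computing the Schur multiplier from the free
  presentation 1 \<rightarrow> R \<rightarrow> F \<rightarrow> Q \<rightarrow> 1.\<close>
definition schur_quot :: "'a mul_lie \<Rightarrow> 'a set \<Rightarrow> 'a set monoid" where
  "schur_quot F R = (F\<lparr>carrier := Mcomm F (carrier F) (carrier F) \<inter> R\<rparr>) Mod (Mcomm F R (carrier F))"

end

theory Submission
  imports Defs
begin


locale mla =
  fixes G :: "'a mul_lie" (structure)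
  assumes is_mla: "mult_lie_alg G"
begin

lemma grp: "group G" using is_mla unfolding mult_lie_alg_def by simp

sublocale group G by (rule grp)

lemma star_closed[simp,intro]: "x \<in> carrier G \<Longrightarrow> y \<in> carrier G \<Longrightarrow> lstar G x y \<in> carrier G"
  using is_mla unfolding mult_lie_alg_def by blast
lemma star_self[simp]: "x \<in> carrier G \<Longrightarrow> lstar G x x = \<one>"
  using is_mla unfolding mult_lie_alg_def by blast
lemma star_right: "x \<in> carrier G \<Longrightarrow> y \<in> carrier G \<Longrightarrow> z \<in> carrier G \<Longrightarrow>
   lstar G x (y \<otimes> z) = lstar G x y \<otimes> conjg G y (lstar G x z)"
  using is_mla unfolding mult_lie_alg_def by blast
lemma star_left: "x \<in> carrier G \<Longrightarrow> y \<in> carrier G \<Longrightarrow> z \<in> carrier G \<Longrightarrow>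
   lstar G (x \<otimes> y) z = conjg G x (lstar G y z) \<otimes> lstar G x z"
  using is_mla unfolding mult_lie_alg_def by blast
lemma star_conj: "x \<in> carrier G \<Longrightarrow> y \<in> carrier G \<Longrightarrow> z \<in> carrier G \<Longrightarrow>
   conjg G z (lstar G x y) = lstar G (conjg G z x) (conjg G z y)"
  using is_mla unfolding mult_lie_alg_def by blast

lemma conjg_closed[simp,intro]: "x \<in> carrier G \<Longrightarrow> y \<in> carrier G \<Longrightarrow> conjg G x y \<in> carrier G"
  unfolding conjg_def by simp
lemma conjg_one_left[simp]: "y \<in> carrier G \<Longrightarrow> conjg G \<one> y = y"
  unfolding conjg_def by simp
lemma conjg_one_right[simp]: "x \<in> carrier G \<Longrightarrow> conjg G x \<one> = \<one>"
  unfolding conjg_def by simp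
lemma conjg_eq_one: "x \<in> carrier G \<Longrightarrow> y \<in> carrier G \<Longrightarrow> conjg G x y = \<one> \<Longrightarrow> y = \<one>"
proof -
  assume a: "x \<in> carrier G" "y \<in> carrier G" "conjg G x y = \<one>"
  have "y = inv x \<otimes> (x \<otimes> y \<otimes> inv x) \<otimes> x" using a by (simp add: m_assoc, simp add: m_assoc[symmetric])
  also have "\<dots> = \<one>" using a unfolding conjg_def by simp
  finally show ?thesis .
qed

lemma star_one_right[simp]: "x \<in> carrier G \<Longrightarrow> lstar G x \<one> = \<one>"
  using star_right[of x \<one> \<one>] by simp
lemma star_one_left[simp]: "x \<in> carrier G \<Longrightarrow> lstar G \<one> x = \<one>"
  using star_left[of \<one> \<one> x] by simp

abbreviation "Zc \<equiv> mla_center G"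

lemma Zc_carrier: "z \<in> Zc \<Longrightarrow> z \<in> carrier G"
  unfolding mla_center_def lie_center_def by auto
lemma Zc_sub: "Zc \<subseteq> carrier G" using Zc_carrier by auto
lemma Zc_star_left[simp]: "z \<in> Zc \<Longrightarrow> y \<in> carrier G \<Longrightarrow> lstar G z y = \<one>"
  unfolding mla_center_def lie_center_def by auto
lemma Zc_comm: "z \<in> Zc \<Longrightarrow> y \<in> carrier G \<Longrightarrow> z \<otimes> y = y \<otimes> z"
  unfolding mla_center_def grp_center_def by auto
lemma Zc_conj[simp]: "z \<in> Zc \<Longrightarrow> y \<in> carrier G \<Longrightarrow> conjg G z y = y"
proof -
  assume a: "z \<in> Zc" "y \<in> carrier G"
  hence zc: "z \<in> carrier G" using Zc_carrier by auto
  have "conjg G z y = (y \<otimes> z) \<otimes> inv z" unfolding conjg_def using Zc_comm[OF a] by simp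
  also have "\<dots> = y" using a zc by (simp add: m_assoc)
  finally show ?thesis .
qed
lemma Zc_star_right[simp]: "z \<in> Zc \<Longrightarrow> y \<in> carrier G \<Longrightarrow> lstar G y z = \<one>"
proof -
  assume z: "z \<in> Zc" and y: "y \<in> carrier G"
  have zc: "z \<in> carrier G" using z Zc_carrier by auto
  have "\<one> = lstar G (y \<otimes> z) (y \<otimes> z)" using y zc by simp
  also have "\<dots> = conjg G y (lstar G z (y \<otimes> z)) \<otimes> lstar G y (y \<otimes> z)"
    by (rule star_left) (simp_all add: y zc)
  also have "\<dots> = lstar G y (y \<otimes> z)" using z y zc by simp
  also have "\<dots> = conjg G y (lstar G y z)" using star_right[of y y z] y zc by simp
  finally show ?thesis using conjg_eq_one y zc by (metis star_closed)
qed

lemma Zc_subgroup: "subgroup Zc G"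
proof (rule subgroupI)
  show "Zc \<subseteq> carrier G" by (rule Zc_sub)
  show "Zc \<noteq> {}" unfolding mla_center_def lie_center_def grp_center_def by auto
next
  fix a assume a: "a \<in> Zc"
  have ac: "a \<in> carrier G" using a Zc_carrier by auto
  have "\<forall>y\<in>carrier G. lstar G (inv a) y = \<one>"
  proof
    fix y assume y: "y \<in> carrier G"
    have "\<one> = lstar G (a \<otimes> inv a) y" using ac y by simp
    also have "\<dots> = conjg G a (lstar G (inv a) y) \<otimes> lstar G a y" by (rule star_left) (simp_all add: ac y)
    also have "\<dots> = lstar G (inv a) y" using a ac y by simp
    finally show "lstar G (inv a) y = \<one>" by simp
  qed
  moreover have "\<forall>y\<in>carrier G. inv a \<otimes> y = y \<otimes> inv a"
  proof
    fix y assume y: "y \<in> carrier G"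
    have "y \<otimes> a = a \<otimes> y" using Zc_comm[OF a y] by simp
    have "inv a \<otimes> y = inv a \<otimes> (y \<otimes> a) \<otimes> inv a" using ac y by (simp add: m_assoc)
    also have "\<dots> = inv a \<otimes> (a \<otimes> y) \<otimes> inv a" using \<open>y \<otimes> a = a \<otimes> y\<close> by simp
    also have "\<dots> = y \<otimes> inv a" using ac y by (simp add: m_assoc[symmetric])
    finally show "inv a \<otimes> y = y \<otimes> inv a" .
  qed
  moreover have "inv a \<in> carrier G" using ac by simp
  ultimately show "inv a \<in> Zc" unfolding mla_center_def lie_center_def grp_center_def by blast
next
  fix a b assume a: "a \<in> Zc" and b: "b \<in> Zc"
  have ac: "a \<in> carrier G" "b \<in> carrier G" using a b Zc_carrier by auto
  have "\<forall>y\<in>carrier G. lstar G (a \<otimes> b) y = \<one>" using star_left a b ac by simp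
  moreover have "\<forall>y\<in>carrier G. (a \<otimes> b) \<otimes> y = y \<otimes> (a \<otimes> b)"
  proof
    fix y assume y: "y \<in> carrier G"
    have "(a \<otimes> b) \<otimes> y = a \<otimes> (b \<otimes> y)" using ac y by (simp add: m_assoc)
    also have "\<dots> = a \<otimes> (y \<otimes> b)" using Zc_comm[OF b y] by simp
    also have "\<dots> = (a \<otimes> y) \<otimes> b" using ac y by (simp add: m_assoc)
    also have "\<dots> = (y \<otimes> a) \<otimes> b" using Zc_comm[OF a y] by simp
    also have "\<dots> = y \<otimes> (a \<otimes> b)" using ac y by (simp add: m_assoc)
    finally show "(a \<otimes> b) \<otimes> y = y \<otimes> (a \<otimes> b)" .
  qed
  moreover have "a \<otimes> b \<in> carrier G" using ac by simp
  ultimately show "a \<otimes> b \<in> Zc" unfolding mla_center_def lie_center_def grp_center_def by blast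
qed

end


context mla
begin

lemma Zc_normal: "Zc \<lhd> G"
proof -
  have "\<forall>x\<in>carrier G. \<forall>h\<in>Zc. x \<otimes> h \<otimes> inv x \<in> Zc"
  proof (intro ballI)
    fix x h assume x: "x \<in> carrier G" and h: "h \<in> Zc"
    have "x \<otimes> h \<otimes> inv x = h \<otimes> x \<otimes> inv x" using Zc_comm[OF h x] by simp
    also have "\<dots> = h" using x Zc_carrier[OF h] by (simp add: m_assoc)
    finally show "x \<otimes> h \<otimes> inv x \<in> Zc" using h by simp
  qed
  thus ?thesis using normal_inv_iff Zc_subgroup by blast
qed

lemma Zc_reduce_star:
  assumes a: "a \<in> carrier G" and b: "b \<in> carrier G" and z: "z \<in> Zc" and w: "w \<in> Zc"
  shows "lstar G (z \<otimes> a) (w \<otimes> b) = lstar G a b"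
proof -
  have zc: "z \<in> carrier G" "w \<in> carrier G" using z w Zc_carrier by auto
  have "lstar G (z \<otimes> a) (w \<otimes> b) = conjg G z (lstar G a (w \<otimes> b)) \<otimes> lstar G z (w \<otimes> b)"
    by (rule star_left) (simp_all add: a b zc)
  also have "\<dots> = lstar G a (w \<otimes> b)" using z a b zc by simp
  also have "\<dots> = lstar G a w \<otimes> conjg G w (lstar G a b)"
    by (rule star_right) (simp_all add: a b zc)
  also have "\<dots> = lstar G a b" using w a b zc by simp
  finally show ?thesis .
qed

lemma gcomm_closed[simp,intro]: "x \<in> carrier G \<Longrightarrow> y \<in> carrier G \<Longrightarrow> gcomm G x y \<in> carrier G"
  unfolding gcomm_def by simp

lemma Zc_reduce_gcomm:
  assumes a: "a \<in> carrier G" and b: "b \<in> carrier G" and z: "z \<in> Zc" and w: "w \<in> Zc"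
  shows "gcomm G (z \<otimes> a) (w \<otimes> b) = gcomm G a b"
proof -
  have zc: "z \<in> carrier G" "w \<in> carrier G" using z w Zc_carrier by auto
  have c1: "\<And>y. y \<in> carrier G \<Longrightarrow> z \<otimes> y = y \<otimes> z" using Zc_comm[OF z] by simp
  have c2: "\<And>y. y \<in> carrier G \<Longrightarrow> w \<otimes> y = y \<otimes> w" using Zc_comm[OF w] by simp
  have "gcomm G (z \<otimes> a) (w \<otimes> b) = z \<otimes> (a \<otimes> (w \<otimes> b) \<otimes> inv (z \<otimes> a) \<otimes> inv (w \<otimes> b))"
    unfolding gcomm_def using a b zc by (simp add: m_assoc)
  also have "\<dots> = (a \<otimes> (w \<otimes> b) \<otimes> inv (z \<otimes> a) \<otimes> inv (w \<otimes> b)) \<otimes> z"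
    using c1 a b zc by simp
  also have "\<dots> = (a \<otimes> (w \<otimes> b) \<otimes> inv a) \<otimes> (inv z \<otimes> inv (w \<otimes> b) \<otimes> z)"
    using a b zc by (simp add: m_assoc inv_mult_group)
  also have "inv z \<otimes> inv (w \<otimes> b) \<otimes> z = inv (w \<otimes> b)"
  proof -
    have "inv z \<otimes> inv (w \<otimes> b) \<otimes> z = inv z \<otimes> (inv (w \<otimes> b) \<otimes> z)" using a b zc by (simp add: m_assoc)
    also have "\<dots> = inv z \<otimes> (z \<otimes> inv (w \<otimes> b))" using c1[of "inv (w \<otimes> b)"] a b zc by simp
    also have "\<dots> = inv (w \<otimes> b)" using a b zc by (simp add: m_assoc[symmetric])
    finally show ?thesis .
  qed
  also have "a \<otimes> (w \<otimes> b) \<otimes> inv a = w \<otimes> (a \<otimes> b \<otimes> inv a)"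
    using c2[of a] a b zc by (simp add: m_assoc[symmetric])
  also have "w \<otimes> (a \<otimes> b \<otimes> inv a) \<otimes> inv (w \<otimes> b) = (a \<otimes> b \<otimes> inv a) \<otimes> (w \<otimes> inv (w \<otimes> b))"
    using c2[of "a \<otimes> b \<otimes> inv a"] a b zc by (simp add: m_assoc)
  also have "w \<otimes> inv (w \<otimes> b) = inv b"
  proof -
    have "w \<otimes> inv (w \<otimes> b) = (w \<otimes> inv b) \<otimes> inv w" using a b zc by (simp add: m_assoc inv_mult_group)
    also have "\<dots> = (inv b \<otimes> w) \<otimes> inv w" using c2[of "inv b"] b by simp
    also have "\<dots> = inv b" using b zc by (simp add: m_assoc)
    finally show ?thesis .
  qed
  finally show ?thesis unfolding gcomm_def using a b by (simp add: m_assoc)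
qed

end

lemma mla_image:
  fixes G :: "'a mul_lie" and T :: "'b mul_lie" and f D
  assumes G: "mult_lie_alg G" and D: "D \<subseteq> carrier G" "\<one>\<^bsub>G\<^esub> \<in> D"
    "\<And>x y. x \<in> D \<Longrightarrow> y \<in> D \<Longrightarrow> x \<otimes>\<^bsub>G\<^esub> y \<in> D"
    "\<And>x. x \<in> D \<Longrightarrow> inv\<^bsub>G\<^esub> x \<in> D"
    "\<And>x y. x \<in> D \<Longrightarrow> y \<in> D \<Longrightarrow> lstar G x y \<in> D"
  and f: "f ` D = carrier T"
    "\<And>x y. x \<in> D \<Longrightarrow> y \<in> D \<Longrightarrow> f (x \<otimes>\<^bsub>G\<^esub> y) = f x \<otimes>\<^bsub>T\<^esub> f y"
    "\<And>x y. x \<in> D \<Longrightarrow> y \<in> D \<Longrightarrow> f (lstar G x y) = lstar T (f x) (f y)"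
    "f \<one>\<^bsub>G\<^esub> = \<one>\<^bsub>T\<^esub>"
  shows "mult_lie_alg T" "\<And>x. x \<in> D \<Longrightarrow> inv\<^bsub>T\<^esub> (f x) = f (inv\<^bsub>G\<^esub> x)"
proof -
  interpret mla G by (rule mla.intro, rule G)
  have fD: "\<And>x. x \<in> D \<Longrightarrow> f x \<in> carrier T" using f(1) by auto
  have cT: "\<forall>y \<in> carrier T. P y" if h: "\<And>x. x \<in> D \<Longrightarrow> P (f x)" for P
  proof
    fix y assume "y \<in> carrier T"
    then obtain x where "x \<in> D" "y = f x" using f(1) by blast
    thus "P y" using h by simp
  qed
  have ex: "\<And>y. y \<in> carrier T \<Longrightarrow> \<exists>x\<in>D. y = f x" using f(1) by auto
  have Dc: "\<And>x. x \<in> D \<Longrightarrow> x \<in> carrier G" using D(1) by auto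
  have grpT: "group T"
  proof (rule groupI)
    fix x y assume "x \<in> carrier T" "y \<in> carrier T"
    then obtain x' y' where "x' \<in> D" "y' \<in> D" "x = f x'" "y = f y'" using ex by blast
    hence "x \<otimes>\<^bsub>T\<^esub> y = f (x' \<otimes>\<^bsub>G\<^esub> y')" using f(2)[of x' y'] by simp
    thus "x \<otimes>\<^bsub>T\<^esub> y \<in> carrier T" using fD D(3) \<open>x' \<in> D\<close> \<open>y' \<in> D\<close> by simp
  next
    show "\<one>\<^bsub>T\<^esub> \<in> carrier T" using f(4) fD D(2) by metis
  next
    fix x y z assume "x \<in> carrier T" "y \<in> carrier T" "z \<in> carrier T"
    then obtain x' y' z' where "x' \<in> D" "y' \<in> D" "z' \<in> D" "x = f x'" "y = f y'" "z = f z'" using ex by meson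
    thus "x \<otimes>\<^bsub>T\<^esub> y \<otimes>\<^bsub>T\<^esub> z = x \<otimes>\<^bsub>T\<^esub> (y \<otimes>\<^bsub>T\<^esub> z)"
      using f(2) D(3) Dc m_assoc by (metis)
  next
    fix x assume "x \<in> carrier T"
    then obtain x' where x': "x' \<in> D" "x = f x'" using ex by blast
    show "\<one>\<^bsub>T\<^esub> \<otimes>\<^bsub>T\<^esub> x = x" using x' f(2)[of "\<one>\<^bsub>G\<^esub>" x'] f(4) D(2) Dc by simp
    show "\<exists>y\<in>carrier T. y \<otimes>\<^bsub>T\<^esub> x = \<one>\<^bsub>T\<^esub>"
      using x' f(2)[of "inv\<^bsub>G\<^esub> x'" x'] f(4) D(4) Dc fD by (intro bexI[of _ "f (inv\<^bsub>G\<^esub> x')"]) auto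
  qed
  interpret T: group T by (rule grpT)
  show invT: "\<And>x. x \<in> D \<Longrightarrow> inv\<^bsub>T\<^esub> (f x) = f (inv\<^bsub>G\<^esub> x)"
    using f(2) f(4) D(4) Dc fD by (intro T.inv_equality) (auto simp flip: f(2))
  have m: "\<And>x y. x \<in> D \<Longrightarrow> y \<in> D \<Longrightarrow> f x \<otimes>\<^bsub>T\<^esub> f y = f (x \<otimes>\<^bsub>G\<^esub> y)" using f(2) by simp
  have s: "\<And>x y. x \<in> D \<Longrightarrow> y \<in> D \<Longrightarrow> lstar T (f x) (f y) = f (lstar G x y)" using f(3) by simp
  have cj: "\<And>x y. x \<in> D \<Longrightarrow> y \<in> D \<Longrightarrow> conjg T (f x) (f y) = f (conjg G x y)"
    unfolding conjg_def using invT m D(3,4) by simp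
  have o: "\<one>\<^bsub>T\<^esub> = f \<one>\<^bsub>G\<^esub>" using f(4) by simp
  have cjD: "\<And>x y. x \<in> D \<Longrightarrow> y \<in> D \<Longrightarrow> conjg G x y \<in> D" unfolding conjg_def using D(3,4) by simp
  note Ds = D(3,4,5) cjD
  show "mult_lie_alg T"
    unfolding mult_lie_alg_def
  proof (intro conjI grpT)
    show "\<forall>x\<in>carrier T. \<forall>y\<in>carrier T. lstar T x y \<in> carrier T"
      by (intro cT) (simp add: s fD Ds)
    show "\<forall>x\<in>carrier T. lstar T x x = \<one>\<^bsub>T\<^esub>"
      by (intro cT) (simp add: s o Dc)
    show "\<forall>x\<in>carrier T. \<forall>y\<in>carrier T. \<forall>z\<in>carrier T.
       lstar T x (y \<otimes>\<^bsub>T\<^esub> z) = lstar T x y \<otimes>\<^bsub>T\<^esub> conjg T y (lstar T x z)"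
      by (intro cT) (simp add: s m cj Ds Dc star_right)
    show "\<forall>x\<in>carrier T. \<forall>y\<in>carrier T. \<forall>z\<in>carrier T.
       lstar T (x \<otimes>\<^bsub>T\<^esub> y) z = conjg T x (lstar T y z) \<otimes>\<^bsub>T\<^esub> lstar T x z"
      by (intro cT) (simp add: s m cj Ds Dc star_left)
    show "\<forall>x\<in>carrier T. \<forall>y\<in>carrier T. \<forall>z\<in>carrier T.
       lstar T (lstar T x y) (conjg T y z) \<otimes>\<^bsub>T\<^esub> lstar T (lstar T y z) (conjg T z x)
         \<otimes>\<^bsub>T\<^esub> lstar T (lstar T z x) (conjg T x y) = \<one>\<^bsub>T\<^esub>"
    proof (intro cT)
      fix x y z assume xyz: "x \<in> D" "y \<in> D" "z \<in> D"
      have "lstar G (lstar G x y) (conjg G y z) \<otimes>\<^bsub>G\<^esub> lstar G (lstar G y z) (conjg G z x)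
         \<otimes>\<^bsub>G\<^esub> lstar G (lstar G z x) (conjg G x y) = \<one>\<^bsub>G\<^esub>"
        using is_mla xyz Dc unfolding mult_lie_alg_def by blast
      thus "lstar T (lstar T (f x) (f y)) (conjg T (f y) (f z)) \<otimes>\<^bsub>T\<^esub> lstar T (lstar T (f y) (f z)) (conjg T (f z) (f x))
         \<otimes>\<^bsub>T\<^esub> lstar T (lstar T (f z) (f x)) (conjg T (f x) (f y)) = \<one>\<^bsub>T\<^esub>"
        using xyz by (simp add: s m cj Ds o)
    qed
    show "\<forall>x\<in>carrier T. \<forall>y\<in>carrier T. \<forall>z\<in>carrier T.
       conjg T z (lstar T x y) = lstar T (conjg T z x) (conjg T z y)"
      by (intro cT) (simp add: s m cj Ds Dc star_conj)
  qed
qed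



lemma mla_image_hom:
  assumes "mult_lie_alg G" "f ` carrier G = carrier T"
    "\<And>x y. x \<in> carrier G \<Longrightarrow> y \<in> carrier G \<Longrightarrow> f (x \<otimes>\<^bsub>G\<^esub> y) = f x \<otimes>\<^bsub>T\<^esub> f y"
    "\<And>x y. x \<in> carrier G \<Longrightarrow> y \<in> carrier G \<Longrightarrow> f (lstar G x y) = lstar T (f x) (f y)"
  shows "f \<in> mla_hom G T"
  using assms unfolding mla_hom_def hom_def by auto

lemma mla_hom_group_hom:
  assumes "mult_lie_alg G" "mult_lie_alg H" "f \<in> mla_hom G H"
  shows "group_hom G H f"
proof -
  interpret G: mla G by (rule mla.intro, rule assms(1))
  interpret H: mla H by (rule mla.intro, rule assms(2))
  show ?thesis using assms(3) unfolding mla_hom_def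
    by (intro group_hom.intro group_hom_axioms.intro) (auto intro: G.grp H.grp)
qed

lemma mla_hom_comp:
  assumes "f \<in> mla_hom G H" "g \<in> mla_hom H J"
  shows "(\<lambda>x. g (f x)) \<in> mla_hom G J"
  using assms unfolding mla_hom_def hom_def by (auto simp: Pi_def)

lemma Mcomm_img:
  assumes G: "mult_lie_alg G" and H: "mult_lie_alg H" and f: "f \<in> mla_hom G H"
    and A: "A \<subseteq> carrier G" and B: "B \<subseteq> carrier G"
  shows "f ` Mcomm G A B = Mcomm H (f ` A) (f ` B)"
proof -
  interpret G: mla G by (rule mla.intro, rule G)
  interpret H: mla H by (rule mla.intro, rule H)
  interpret h: group_hom G H f by (rule mla_hom_group_hom[OF G H f])
  have fs: "\<And>x y. x \<in> carrier G \<Longrightarrow> y \<in> carrier G \<Longrightarrow> f (lstar G x y) = lstar H (f x) (f y)"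
    using f unfolding mla_hom_def by auto
  have fg: "\<And>x y. x \<in> carrier G \<Longrightarrow> y \<in> carrier G \<Longrightarrow> f (gcomm G x y) = gcomm H (f x) (f y)"
    unfolding gcomm_def by simp
  let ?S = "{lstar G a b | a b. a \<in> A \<and> b \<in> B} \<union> {gcomm G a b | a b. a \<in> A \<and> b \<in> B}"
  have S: "?S \<subseteq> carrier G" using A B by auto
  have fS: "f ` ?S = {lstar H a b | a b. a \<in> f ` A \<and> b \<in> f ` B} \<union> {gcomm H a b | a b. a \<in> f ` A \<and> b \<in> f ` B}" (is "_ = ?R")
  proof
    show "f ` ?S \<subseteq> ?R"
    proof
      fix x assume "x \<in> f ` ?S"
      then obtain a b where ab: "a \<in> A" "b \<in> B" and "x = f (lstar G a b) \<or> x = f (gcomm G a b)" by blast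
      moreover have abc: "a \<in> carrier G" "b \<in> carrier G" using ab A B by auto
      ultimately have "x = lstar H (f a) (f b) \<or> x = gcomm H (f a) (f b)" using fs[OF abc] fg[OF abc] by auto
      thus "x \<in> ?R" using ab by blast
    qed
    show "?R \<subseteq> f ` ?S"
    proof
      fix x assume "x \<in> {lstar H a b | a b. a \<in> f ` A \<and> b \<in> f ` B} \<union> {gcomm H a b | a b. a \<in> f ` A \<and> b \<in> f ` B}"
      then obtain a b where ab: "a \<in> A" "b \<in> B" and d: "x = lstar H (f a) (f b) \<or> x = gcomm H (f a) (f b)" by blast
      have abc: "a \<in> carrier G" "b \<in> carrier G" using ab A B by auto
      from d show "x \<in> f ` ?S"
      proof
        assume "x = lstar H (f a) (f b)"
        hence "x = f (lstar G a b)" using fs[OF abc] by auto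
        thus ?thesis using ab by blast
      next
        assume "x = gcomm H (f a) (f b)"
        hence "x = f (gcomm G a b)" using fg[OF abc] by auto
        thus ?thesis using ab by blast
      qed
    qed
  qed
  show ?thesis unfolding Mcomm_def using h.generate_img[OF S] fS by simp
qed

context mla
begin

abbreviation "Q \<equiv> quot_mla G Zc"

lemma Q_carrier: "carrier Q = rcosets Zc" unfolding quot_mla_def by simp
lemma Q_mult: "x \<otimes>\<^bsub>Q\<^esub> y = x <#> y" unfolding quot_mla_def by simp
lemma Q_one: "\<one>\<^bsub>Q\<^esub> = Zc" unfolding quot_mla_def by simp

lemma rcos_elem: "x \<in> Zc #> a \<Longrightarrow> \<exists>z\<in>Zc. x = z \<otimes> a"
  unfolding r_coset_def by auto

lemma Q_star: assumes a: "a \<in> carrier G" and b: "b \<in> carrier G"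
  shows "lstar Q (Zc #> a) (Zc #> b) = Zc #> lstar G a b"
proof -
  have "\<exists>x. x \<in> Zc #> a" using rcos_self[OF a Zc_subgroup] by blast
  hence "(SOME x. x \<in> Zc #> a) \<in> Zc #> a" by (rule someI_ex)
  then obtain z where z: "z \<in> Zc" "(SOME x. x \<in> Zc #> a) = z \<otimes> a" using rcos_elem by blast
  have "\<exists>x. x \<in> Zc #> b" using rcos_self[OF b Zc_subgroup] by blast
  hence "(SOME x. x \<in> Zc #> b) \<in> Zc #> b" by (rule someI_ex)
  then obtain w where w: "w \<in> Zc" "(SOME x. x \<in> Zc #> b) = w \<otimes> b" using rcos_elem by blast
  show ?thesis unfolding quot_mla_def using z w Zc_reduce_star[OF a b z(1) w(1)] by simp
qed

lemma p_facts:
  "mult_lie_alg Q" "(\<lambda>x. Zc #> x) \<in> mla_hom G Q"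
  "\<And>x. x \<in> carrier G \<Longrightarrow> inv\<^bsub>Q\<^esub> (Zc #> x) = Zc #> inv x"
proof -
  have img: "(\<lambda>x. Zc #> x) ` carrier G = carrier Q" unfolding Q_carrier RCOSETS_def by auto
  have m: "\<And>x y. x \<in> carrier G \<Longrightarrow> y \<in> carrier G \<Longrightarrow> Zc #> (x \<otimes> y) = (Zc #> x) \<otimes>\<^bsub>Q\<^esub> (Zc #> y)"
    unfolding Q_mult using normal.rcos_sum[OF Zc_normal] by simp
  have s: "\<And>x y. x \<in> carrier G \<Longrightarrow> y \<in> carrier G \<Longrightarrow> Zc #> (lstar G x y) = lstar Q (Zc #> x) (Zc #> y)"
    using Q_star by simp
  have o: "Zc #> \<one> = \<one>\<^bsub>Q\<^esub>" unfolding Q_one using Zc_sub by simp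
  note r = mla_image[where D = "carrier G" and f = "\<lambda>x. Zc #> x", OF is_mla _ _ _ _ _ img m s o]
  show "mult_lie_alg Q" by (rule r(1)) auto
  show "\<And>x. x \<in> carrier G \<Longrightarrow> inv\<^bsub>Q\<^esub> (Zc #> x) = Zc #> inv x" by (rule r(2)) auto
  show "(\<lambda>x. Zc #> x) \<in> mla_hom G Q" by (rule mla_image_hom[OF is_mla img m s])
qed

lemma third:
  "(\<lambda>y. Zc #> y) ` Mcomm G (carrier G) (carrier G) = Mcomm Q (carrier Q) (carrier Q)"
proof -
  have img: "(\<lambda>x. Zc #> x) ` carrier G = carrier Q" unfolding Q_carrier RCOSETS_def by auto
  show ?thesis using Mcomm_img[OF is_mla p_facts(1) p_facts(2)] img by simp
qed

end


lemma free_unique: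
  fixes F T :: "'a mul_lie"
  assumes free: "free_mla F B" and T: "mult_lie_alg T" and h1: "h1 \<in> mla_hom F T" and h2: "h2 \<in> mla_hom F T"
    and eq: "\<And>x. x \<in> B \<Longrightarrow> h1 x = h2 x" and y: "y \<in> carrier F"
  shows "h1 y = h2 y"
proof -
  have "\<forall>x\<in>B. h1 x \<in> carrier T" using h1 free unfolding free_mla_def mla_hom_def hom_def by auto
  moreover note A = conjunct2[OF conjunct2[OF free[unfolded free_mla_def]]]
  ultimately have "\<forall>h1 \<in> mla_hom F T. \<forall>h2 \<in> mla_hom F T. (\<forall>x\<in>B. h1 x = h2 x) \<longrightarrow> (\<forall>y\<in>carrier F. h1 y = h2 y)"
    using T spec[OF spec[OF A, of T], of h1] by blast
  thus ?thesis using h1 h2 eq y by blast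
qed

lemma free_exists:
  fixes F T :: "'a mul_lie"
  assumes free: "free_mla F B" and T: "mult_lie_alg T" and f: "\<And>x. x \<in> B \<Longrightarrow> f x \<in> carrier T"
  shows "\<exists>h \<in> mla_hom F T. \<forall>x\<in>B. h x = f x"
  using free T f unfolding free_mla_def by blast

lemma free_mla: "free_mla F B \<Longrightarrow> mult_lie_alg F" unfolding free_mla_def by simp

lemma lift_unique:
  fixes K :: "'k mul_lie" and F :: "'a mul_lie" and B :: "'a set" and \<pi> :: "'a \<Rightarrow> 'k set"
  assumes K: "mult_lie_alg K"
    and free: "free_mla F B"
    and hom: "\<pi> \<in> mla_hom F (quot_mla K (mla_center K))"
    and surj: "\<pi> ` carrier F = carrier (quot_mla K (mla_center K))"
    and phi: "\<phi> \<in> mla_hom F K" and onB: "\<And>b. b \<in> B \<Longrightarrow> \<phi> b \<in> \<pi> b"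
  shows "\<And>x. x \<in> carrier F \<Longrightarrow> mla_center K #>\<^bsub>K\<^esub> \<phi> x = \<pi> x"
proof -
  interpret mla K by (rule mla.intro, rule K)
  have F: "mult_lie_alg F" using free free_mla by blast
  define g where "g = inv_into (carrier F) \<pi>"
  have pig: "\<And>q. q \<in> carrier Q \<Longrightarrow> \<pi> (g q) = q" unfolding g_def using surj by (simp add: f_inv_into_f)
  have injg: "inj_on g (carrier Q)" unfolding g_def using surj by (simp add: inj_on_inv_into)
  define T :: "'a mul_lie" where "T = \<lparr> carrier = g ` carrier Q,
     monoid.mult = (\<lambda>x y. g (\<pi> x \<otimes>\<^bsub>Q\<^esub> \<pi> y)), one = g \<one>\<^bsub>Q\<^esub>,
     lstar = (\<lambda>x y. g (lstar Q (\<pi> x) (\<pi> y))) \<rparr>"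
  interpret Qm: mla Q by (rule mla.intro, rule p_facts(1))
  have img: "g ` carrier Q = carrier T" unfolding T_def by simp
  have m: "\<And>x y. x \<in> carrier Q \<Longrightarrow> y \<in> carrier Q \<Longrightarrow> g (x \<otimes>\<^bsub>Q\<^esub> y) = g x \<otimes>\<^bsub>T\<^esub> g y"
    unfolding T_def using pig by simp
  have s: "\<And>x y. x \<in> carrier Q \<Longrightarrow> y \<in> carrier Q \<Longrightarrow> g (lstar Q x y) = lstar T (g x) (g y)"
    unfolding T_def using pig by simp
  have o: "g \<one>\<^bsub>Q\<^esub> = \<one>\<^bsub>T\<^esub>" unfolding T_def by simp
  have Tm: "mult_lie_alg T"
    by (rule mla_image(1)[where D = "carrier Q" and f = g, OF p_facts(1) _ _ _ _ _ img m s o]) auto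
  have gh: "g \<in> mla_hom Q T" by (rule mla_image_hom[OF p_facts(1) img m s])
  have h1: "(\<lambda>x. g (\<pi> x)) \<in> mla_hom F T" by (rule mla_hom_comp[OF hom gh])
  have h2: "(\<lambda>x. g (mla_center K #>\<^bsub>K\<^esub> \<phi> x)) \<in> mla_hom F T"
    by (rule mla_hom_comp[OF mla_hom_comp[OF phi p_facts(2)] gh])
  have phic: "\<And>x. x \<in> carrier F \<Longrightarrow> \<phi> x \<in> carrier K" using phi unfolding mla_hom_def hom_def by auto
  have pic: "\<And>x. x \<in> carrier F \<Longrightarrow> \<pi> x \<in> carrier Q" using surj by auto
  have Bc: "B \<subseteq> carrier F" using free unfolding free_mla_def by simp
  have eqB: "\<And>b. b \<in> B \<Longrightarrow> g (\<pi> b) = g (Zc #>\<^bsub>K\<^esub> \<phi> b)"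
  proof -
    fix b assume b: "b \<in> B"
    hence "\<pi> b \<in> rcosets\<^bsub>K\<^esub> Zc" using pic Bc Q_carrier by auto
    then obtain a where a: "a \<in> carrier K" "\<pi> b = Zc #>\<^bsub>K\<^esub> a" unfolding RCOSETS_def by auto
    have "Zc #>\<^bsub>K\<^esub> a = Zc #>\<^bsub>K\<^esub> \<phi> b" using repr_independence[OF _ a(1) Zc_subgroup] onB[OF b] a by simp
    thus "g (\<pi> b) = g (Zc #>\<^bsub>K\<^esub> \<phi> b)" using a by simp
  qed
  fix x assume x: "x \<in> carrier F"
  have "g (\<pi> x) = g (Zc #>\<^bsub>K\<^esub> \<phi> x)" by (rule free_unique[OF free Tm h1 h2 eqB x])
  moreover have "Zc #>\<^bsub>K\<^esub> \<phi> x \<in> carrier Q" using phic[OF x] unfolding Q_carrier RCOSETS_def by auto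
  ultimately show "Zc #>\<^bsub>K\<^esub> \<phi> x = \<pi> x" using inj_onD[OF injg _ pic[OF x]] by simp
qed



datatype 'x tm = Lf 'x | One | Mu "'x tm" "'x tm" | Iv "'x tm" | St "'x tm" "'x tm"

primrec ev :: "'k mul_lie \<Rightarrow> ('x \<Rightarrow> 'k) \<Rightarrow> 'x tm \<Rightarrow> 'k" where
  "ev G l (Lf x) = l x"
| "ev G l One = \<one>\<^bsub>G\<^esub>"
| "ev G l (Mu s t) = ev G l s \<otimes>\<^bsub>G\<^esub> ev G l t"
| "ev G l (Iv s) = inv\<^bsub>G\<^esub> (ev G l s)"
| "ev G l (St s t) = lstar G (ev G l s) (ev G l t)"

primrec enc :: "('a \<times> 'a \<Rightarrow> 'a) \<Rightarrow> (nat \<Rightarrow> 'a) \<Rightarrow> 'a tm \<Rightarrow> 'a" where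
  "enc p n (Lf x) = p (n 0, x)"
| "enc p n One = p (n 1, n 0)"
| "enc p n (Mu s t) = p (n 2, p (enc p n s, enc p n t))"
| "enc p n (Iv s) = p (n 3, enc p n s)"
| "enc p n (St s t) = p (n 4, p (enc p n s, enc p n t))"

lemma enc_inj: assumes p: "inj p" and n: "inj n" shows "inj (enc p n)"
proof -
  have "\<forall>t. enc p n s = enc p n t \<longrightarrow> s = t" for s
  proof (induction s)
    case (Lf x) show ?case by (intro allI, case_tac t) (simp_all add: inj_eq[OF p] inj_eq[OF n])
  next
    case One show ?case by (intro allI, case_tac t) (simp_all add: inj_eq[OF p] inj_eq[OF n])
  next
    case (Mu s1 s2) thus ?case by (intro allI, case_tac t) (simp_all add: inj_eq[OF p] inj_eq[OF n])
  next
    case (Iv s1) thus ?case by (intro allI, case_tac t) (simp_all add: inj_eq[OF p] inj_eq[OF n])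
  next
    case (St s1 s2) thus ?case by (intro allI, case_tac t) (simp_all add: inj_eq[OF p] inj_eq[OF n])
  qed
  thus ?thesis unfolding inj_def by blast
qed

lemma exists_enc: assumes inf: "infinite (UNIV :: 'a set)" shows "\<exists>e :: 'a tm \<Rightarrow> 'a. inj e"
proof -
  obtain n :: "nat \<Rightarrow> 'a" where n: "inj n" using infinite_iff_countable_subset[THEN iffD1, OF inf] by blast
  have "\<exists>f. inj_on f ((UNIV::'a set) \<times> (UNIV::'a set)) \<and> f ` (UNIV \<times> UNIV) \<subseteq> (UNIV::'a set)"
    by (rule card_of_ordLeq[THEN iffD2]) (use card_of_Times_same_infinite[OF inf] ordIso_iff_ordLeq in blast)
  then obtain p :: "'a \<times> 'a \<Rightarrow> 'a" where "inj_on p (UNIV \<times> UNIV)" by blast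
  hence p: "inj p" by simp
  show ?thesis using enc_inj[OF p n] by blast
qed

lemma lift_exists_inf:
  fixes K :: "'k mul_lie" and F :: "'a mul_lie" and B :: "'a set" and l :: "'a \<Rightarrow> 'k"
  assumes K: "mult_lie_alg K" and free: "free_mla F B" and inf: "infinite (UNIV :: 'a set)"
    and l: "\<And>b. b \<in> B \<Longrightarrow> l b \<in> carrier K"
  shows "\<exists>\<phi> \<in> mla_hom F K. \<forall>b\<in>B. \<phi> b = l b"
proof -
  interpret mla K by (rule mla.intro, rule K)
  define l' where "l' x = (if x \<in> B then l x else \<one>\<^bsub>K\<^esub>)" for x
  define E where "E = range (ev K l')"
  have Ec: "ev K l' t \<in> carrier K" for t by (induction t) (auto simp: l'_def l)
  have EK: "E \<subseteq> carrier K" unfolding E_def using Ec by auto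
  have E1: "\<one>\<^bsub>K\<^esub> \<in> E" unfolding E_def using ev.simps(2)[of K l', symmetric] by blast
  have Em: "x \<otimes>\<^bsub>K\<^esub> y \<in> E" if xy: "x \<in> E" "y \<in> E" for x y
  proof -
    obtain s t where "x = ev K l' s" "y = ev K l' t" using xy unfolding E_def by blast
    hence "x \<otimes>\<^bsub>K\<^esub> y = ev K l' (Mu s t)" by simp
    thus ?thesis unfolding E_def by blast
  qed
  have Ei: "inv\<^bsub>K\<^esub> x \<in> E" if xy: "x \<in> E" for x
  proof -
    obtain s where "x = ev K l' s" using xy unfolding E_def by blast
    hence "inv\<^bsub>K\<^esub> x = ev K l' (Iv s)" by simp
    thus ?thesis unfolding E_def by blast
  qed
  have Es: "lstar K x y \<in> E" if xy: "x \<in> E" "y \<in> E" for x y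
  proof -
    obtain s t where "x = ev K l' s" "y = ev K l' t" using xy unfolding E_def by blast
    hence "lstar K x y = ev K l' (St s t)" by simp
    thus ?thesis unfolding E_def by blast
  qed
  have El: "l' b \<in> E" for b unfolding E_def using ev.simps(1)[of K l' b, symmetric] by blast
  obtain e :: "'a tm \<Rightarrow> 'a" where e: "inj e" using exists_enc[OF inf] by blast
  define j where "j k = e (SOME t. ev K l' t = k)" for k
  have injj: "inj_on j E"
  proof (rule inj_onI)
    fix x y assume xy: "x \<in> E" "y \<in> E" "j x = j y"
    hence eq: "(SOME t. ev K l' t = x) = (SOME t. ev K l' t = y)" unfolding j_def using e by (simp add: inj_eq)
    have "\<exists>t. ev K l' t = x" using xy(1) unfolding E_def by auto
    hence "ev K l' (SOME t. ev K l' t = x) = x" by (rule someI_ex)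
    moreover have "\<exists>t. ev K l' t = y" using xy(2) unfolding E_def by auto
    hence "ev K l' (SOME t. ev K l' t = y) = y" by (rule someI_ex)
    ultimately show "x = y" using eq by (metis (no_types))
  qed
  define j' where "j' = inv_into E j"
  have j'j: "\<And>x. x \<in> E \<Longrightarrow> j' (j x) = x" unfolding j'_def using injj by simp
  define T :: "'a mul_lie" where "T = \<lparr> carrier = j ` E,
     monoid.mult = (\<lambda>x y. j (j' x \<otimes>\<^bsub>K\<^esub> j' y)), one = j \<one>\<^bsub>K\<^esub>,
     lstar = (\<lambda>x y. j (lstar K (j' x) (j' y))) \<rparr>"
  have img: "j ` E = carrier T" unfolding T_def by simp
  have m: "\<And>x y. x \<in> E \<Longrightarrow> y \<in> E \<Longrightarrow> j (x \<otimes>\<^bsub>K\<^esub> y) = j x \<otimes>\<^bsub>T\<^esub> j y"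
    unfolding T_def using j'j by simp
  have s: "\<And>x y. x \<in> E \<Longrightarrow> y \<in> E \<Longrightarrow> j (lstar K x y) = lstar T (j x) (j y)"
    unfolding T_def using j'j by simp
  have o: "j \<one>\<^bsub>K\<^esub> = \<one>\<^bsub>T\<^esub>" unfolding T_def by simp
  have Tm: "mult_lie_alg T"
    by (rule mla_image(1)[where D = E and f = j, OF K EK E1 Em Ei Es img m s o])
  have "\<And>b. b \<in> B \<Longrightarrow> j (l' b) \<in> carrier T" using El img by auto
  hence "\<exists>h \<in> mla_hom F T. \<forall>x\<in>B. h x = j (l' x)" by (rule free_exists[OF free Tm])
  then obtain h where h: "h \<in> mla_hom F T" "\<forall>b\<in>B. h b = j (l' b)" by blast
  have hc: "\<And>x. x \<in> carrier F \<Longrightarrow> h x \<in> j ` E" using h(1) img unfolding mla_hom_def hom_def by auto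
  have hE: "\<And>x. x \<in> carrier F \<Longrightarrow> j' (h x) \<in> E" using hc unfolding j'_def by (simp add: inv_into_into)
  have jj': "\<And>x. x \<in> carrier F \<Longrightarrow> j (j' (h x)) = h x" using hc unfolding j'_def by (simp add: f_inv_into_f)
  have hm: "\<And>x y. x \<in> carrier F \<Longrightarrow> y \<in> carrier F \<Longrightarrow> h (x \<otimes>\<^bsub>F\<^esub> y) = h x \<otimes>\<^bsub>T\<^esub> h y"
    using h(1) unfolding mla_hom_def hom_def by auto
  have hs: "\<And>x y. x \<in> carrier F \<Longrightarrow> y \<in> carrier F \<Longrightarrow> h (lstar F x y) = lstar T (h x) (h y)"
    using h(1) unfolding mla_hom_def by auto
  have "(\<lambda>x. j' (h x)) \<in> mla_hom F K"
    unfolding mla_hom_def hom_def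
  proof (intro CollectI conjI ballI)
    show "(\<lambda>x. j' (h x)) \<in> carrier F \<rightarrow> carrier K" using hE EK by auto
  next
    fix x y assume xy: "x \<in> carrier F" "y \<in> carrier F"
    have "j' (h (x \<otimes>\<^bsub>F\<^esub> y)) = j' (j (j' (h x) \<otimes>\<^bsub>K\<^esub> j' (h y)))" using hm[OF xy] unfolding T_def by simp
    also have "\<dots> = j' (h x) \<otimes>\<^bsub>K\<^esub> j' (h y)" using j'j Em hE xy by simp
    finally show "j' (h (x \<otimes>\<^bsub>F\<^esub> y)) = j' (h x) \<otimes>\<^bsub>K\<^esub> j' (h y)" .
    have "j' (h (lstar F x y)) = j' (j (lstar K (j' (h x)) (j' (h y))))" using hs[OF xy] unfolding T_def by simp
    also have "\<dots> = lstar K (j' (h x)) (j' (h y))" using j'j Es hE xy by simp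
    finally show "j' (h (lstar F x y)) = lstar K (j' (h x)) (j' (h y))" .
  qed
  moreover have "\<forall>b\<in>B. j' (h b) = l b"
  proof
    fix b assume b: "b \<in> B"
    have "l b \<in> E" using El[of b] b unfolding l'_def by simp
    thus "j' (h b) = l b" using h(2) b j'j unfolding l'_def by simp
  qed
  ultimately show ?thesis by (intro bexI[of _ "\<lambda>x. j' (h x)"]) auto
qed



lemma triv_star_mla:
  fixes G :: "'a mul_lie"
  assumes g: "group G" and s: "\<And>x y. lstar G x y = \<one>\<^bsub>G\<^esub>"
  shows "mult_lie_alg G"
proof -
  interpret group G by (rule g)
  have c: "\<And>x. x \<in> carrier G \<Longrightarrow> conjg G x \<one>\<^bsub>G\<^esub> = \<one>\<^bsub>G\<^esub>" unfolding conjg_def by simp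
  show ?thesis unfolding mult_lie_alg_def using g by (simp add: s c conjg_def)
qed

definition Cn :: "nat \<Rightarrow> int mul_lie" where
  "Cn n = \<lparr> carrier = {0..<int n}, monoid.mult = (\<lambda>x y. (x + y) mod int n), one = 0,
           lstar = (\<lambda>x y. 0) \<rparr>"

lemma Cn_group: assumes n: "n > 0" shows "group (Cn n)"
proof (rule groupI)
  fix x y assume "x \<in> carrier (Cn n)" "y \<in> carrier (Cn n)"
  thus "x \<otimes>\<^bsub>Cn n\<^esub> y \<in> carrier (Cn n)" using n unfolding Cn_def by simp
next
  show "\<one>\<^bsub>Cn n\<^esub> \<in> carrier (Cn n)" using n unfolding Cn_def by simp
next
  fix x y z
  show "x \<otimes>\<^bsub>Cn n\<^esub> y \<otimes>\<^bsub>Cn n\<^esub> z = x \<otimes>\<^bsub>Cn n\<^esub> (y \<otimes>\<^bsub>Cn n\<^esub> z)"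
    unfolding Cn_def by (simp add: mod_add_left_eq mod_add_right_eq add.assoc)
next
  fix x assume "x \<in> carrier (Cn n)"
  thus "\<one>\<^bsub>Cn n\<^esub> \<otimes>\<^bsub>Cn n\<^esub> x = x" unfolding Cn_def by simp
  show "\<exists>y\<in>carrier (Cn n). y \<otimes>\<^bsub>Cn n\<^esub> x = \<one>\<^bsub>Cn n\<^esub>"
  proof (intro bexI)
    show "(int n - x) mod int n \<otimes>\<^bsub>Cn n\<^esub> x = \<one>\<^bsub>Cn n\<^esub>" unfolding Cn_def by (simp add: mod_add_left_eq)
    show "(int n - x) mod int n \<in> carrier (Cn n)" using n unfolding Cn_def by simp
  qed
qed

lemma Cn_mla: "n > 0 \<Longrightarrow> mult_lie_alg (Cn n)"
  by (rule triv_star_mla[OF Cn_group]) (simp_all add: Cn_def)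

context mla
begin

lemma pow_star1: "c \<in> carrier G \<Longrightarrow> lstar G (c [^] (i::nat)) c = \<one>"
proof (induction i)
  case 0 thus ?case by simp
next
  case (Suc i)
  have "lstar G (c [^] Suc i) c = conjg G (c [^] i) (lstar G c c) \<otimes> lstar G (c [^] i) c"
    using Suc.prems by (simp add: star_left)
  thus ?case using Suc by simp
qed

lemma pow_star: "c \<in> carrier G \<Longrightarrow> lstar G (c [^] (i::nat)) (c [^] (j::nat)) = \<one>"
proof (induction j)
  case 0 thus ?case by simp
next
  case (Suc j)
  have "lstar G (c [^] i) (c [^] Suc j) = lstar G (c [^] i) (c [^] j) \<otimes> conjg G (c [^] j) (lstar G (c [^] i) c)"
    using Suc.prems by (simp add: star_right)
  thus ?case using Suc pow_star1 by simp
qed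

lemma comm_central:
  assumes z: "z \<in> Zc" and w: "w \<in> Zc" and u: "u \<in> carrier G" and v: "v \<in> carrier G" and uv: "u \<otimes> v = v \<otimes> u"
  shows "(z \<otimes> u) \<otimes> (w \<otimes> v) = (w \<otimes> v) \<otimes> (z \<otimes> u)"
proof -
  have zc: "z \<in> carrier G" "w \<in> carrier G" using z w Zc_carrier by auto
  have gen: "(z \<otimes> u) \<otimes> (w \<otimes> v) = (z \<otimes> w) \<otimes> (u \<otimes> v)"
    if z: "z \<in> Zc" and w: "w \<in> Zc" and u: "u \<in> carrier G" and v: "v \<in> carrier G" for z w u v
  proof -
    have zc: "z \<in> carrier G" "w \<in> carrier G" using z w Zc_carrier by auto
    have "(z \<otimes> u) \<otimes> (w \<otimes> v) = z \<otimes> ((u \<otimes> w) \<otimes> v)" using zc u v by (simp add: m_assoc)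
    also have "\<dots> = z \<otimes> ((w \<otimes> u) \<otimes> v)" using Zc_comm[OF w u] by simp
    also have "\<dots> = (z \<otimes> w) \<otimes> (u \<otimes> v)" using zc u v by (simp add: m_assoc)
    finally show ?thesis .
  qed
  have "(z \<otimes> u) \<otimes> (w \<otimes> v) = (z \<otimes> w) \<otimes> (u \<otimes> v)" by (rule gen[OF z w u v])
  also have "\<dots> = (w \<otimes> z) \<otimes> (v \<otimes> u)" using Zc_comm[OF z zc(2)] uv by simp
  also have "\<dots> = (w \<otimes> v) \<otimes> (z \<otimes> u)" by (rule gen[OF w z v u, symmetric])
  finally show ?thesis .
qed

lemma cyclic_center:
  assumes c: "c \<in> carrier G" and cyc: "\<And>a. a \<in> carrier G \<Longrightarrow> \<exists>k::nat. Zc #> a = Zc #> c [^] k"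
  shows "carrier G \<subseteq> Zc"
proof -
  have rep: "\<exists>z k. z \<in> Zc \<and> a = z \<otimes> c [^] (k::nat)" if a: "a \<in> carrier G" for a
  proof -
    obtain k :: nat where k: "Zc #> a = Zc #> c [^] k" using cyc[OF a] by blast
    have "a \<in> Zc #> c [^] k" using rcos_self[OF a Zc_subgroup] k by simp
    then obtain z where "z \<in> Zc" "a = z \<otimes> c [^] k" using rcos_elem by blast
    thus ?thesis by blast
  qed
  show ?thesis
  proof
    fix a assume a: "a \<in> carrier G"
    obtain z k where zk: "z \<in> Zc" "a = z \<otimes> c [^] (k::nat)" using rep[OF a] by blast
    have "\<forall>y\<in>carrier G. lstar G a y = \<one>"
    proof
      fix y assume y: "y \<in> carrier G"
      obtain w j where wj: "w \<in> Zc" "y = w \<otimes> c [^] (j::nat)" using rep[OF y] by blast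
      show "lstar G a y = \<one>" using zk wj Zc_reduce_star c pow_star by simp
    qed
    moreover have "\<forall>y\<in>carrier G. a \<otimes> y = y \<otimes> a"
    proof
      fix y assume y: "y \<in> carrier G"
      obtain w j where wj: "w \<in> Zc" "y = w \<otimes> c [^] (j::nat)" using rep[OF y] by blast
      have "c [^] k \<otimes> c [^] j = c [^] j \<otimes> c [^] k" using c by (simp add: nat_pow_mult add.commute)
      thus "a \<otimes> y = y \<otimes> a" using zk wj comm_central c by simp
    qed
    ultimately show "a \<in> Zc" using a unfolding mla_center_def lie_center_def grp_center_def by blast
  qed
qed

end



lemma finite_cyclic:
  fixes K :: "'k mul_lie" and F :: "'a mul_lie" and B :: "'a set" and \<pi> :: "'a \<Rightarrow> 'k set"
  assumes K: "mult_lie_alg K"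
    and free: "free_mla F B"
    and hom: "\<pi> \<in> mla_hom F (quot_mla K (mla_center K))"
    and surj: "\<pi> ` carrier F = carrier (quot_mla K (mla_center K))"
    and fin: "finite (UNIV :: 'a set)" and b0: "b0 \<in> B" and N: "card (UNIV :: 'a set) \<ge> 2"
  shows "carrier K \<subseteq> mla_center K"
proof -
  interpret mla K by (rule mla.intro, rule K)
  have Fm: "mult_lie_alg F" using free free_mla by blast
  interpret Fm: mla F by (rule mla.intro, rule Fm)
  interpret Qm: mla Q by (rule mla.intro, rule p_facts(1))
  have Bc: "B \<subseteq> carrier F" using free unfolding free_mla_def by simp
  have b0c: "b0 \<in> carrier F" using b0 Bc by auto
  define N where "N = card (UNIV :: 'a set)"
  have N2: "N \<ge> 2" using N unfolding N_def by simp
  obtain h0 where h0: "bij_betw h0 {0..<N} (UNIV :: 'a set)" unfolding N_def using ex_bij_betw_nat_finite[OF fin] by blast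
  define e :: "int \<Rightarrow> 'a" where "e x = h0 (nat x)" for x
  have inje: "inj_on e {0..<int N}"
  proof (rule inj_onI)
    fix x y assume xy: "x \<in> {0..<int N}" "y \<in> {0..<int N}" "e x = e y"
    have "nat x \<in> {0..<N}" "nat y \<in> {0..<N}" using xy by auto
    hence "nat x = nat y" using xy(3) h0 unfolding e_def bij_betw_def inj_on_def by blast
    thus "x = y" using xy by (simp add: nat_eq_iff2)
  qed
  have imge: "e ` {0..<int N} = UNIV"
  proof -
    have "a \<in> e ` {0..<int N}" for a
    proof -
      obtain k where k: "k \<in> {0..<N}" "a = h0 k" using h0 unfolding bij_betw_def by blast
      hence ae: "a = e (int k)" unfolding e_def by simp
      have "int k \<in> {0..<int N}" using k by simp
      thus ?thesis using ae by blast
    qed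
    thus ?thesis by blast
  qed
  define d where "d = inv_into {0..<int N} e"
  have de: "\<And>x. x \<in> {0..<int N} \<Longrightarrow> d (e x) = x" unfolding d_def using inje by simp
  define C where "C = Cn N"
  have Cc: "carrier C = {0..<int N}" unfolding C_def Cn_def by simp
  have Cm: "\<And>x y. x \<otimes>\<^bsub>C\<^esub> y = (x + y) mod int N" unfolding C_def Cn_def by simp
  have Cone: "\<one>\<^bsub>C\<^esub> = 0" unfolding C_def Cn_def by simp
  have Cs: "\<And>x y. lstar C x y = 0" unfolding C_def Cn_def by simp
  have CM: "mult_lie_alg C" unfolding C_def using Cn_mla N2 by simp
  interpret Cg: mla C by (rule mla.intro, rule CM)
  define T :: "'a mul_lie" where "T = \<lparr> carrier = UNIV,
     monoid.mult = (\<lambda>x y. e (d x \<otimes>\<^bsub>C\<^esub> d y)), one = e 0, lstar = (\<lambda>x y. e 0) \<rparr>"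
  have img: "e ` carrier C = carrier T" unfolding T_def Cc using imge by simp
  have m: "\<And>x y. x \<in> carrier C \<Longrightarrow> y \<in> carrier C \<Longrightarrow> e (x \<otimes>\<^bsub>C\<^esub> y) = e x \<otimes>\<^bsub>T\<^esub> e y"
    unfolding T_def using de Cc by simp
  have s: "\<And>x y. x \<in> carrier C \<Longrightarrow> y \<in> carrier C \<Longrightarrow> e (lstar C x y) = lstar T (e x) (e y)"
    unfolding T_def using Cs by simp
  have o: "e \<one>\<^bsub>C\<^esub> = \<one>\<^bsub>T\<^esub>" unfolding T_def Cone by simp
  have TM: "mult_lie_alg T"
    by (rule mla_image(1)[where D = "carrier C" and f = e, OF CM _ _ _ _ _ img m s o]) auto
  have "\<exists>h \<in> mla_hom F T. \<forall>x\<in>B. h x = e 1" by (rule free_exists[OF free TM]) (simp add: T_def)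
  then obtain hk where hk: "hk \<in> mla_hom F T" "\<forall>x\<in>B. hk x = e 1" by blast
  interpret hg: group_hom F T hk by (rule mla_hom_group_hom[OF Fm TM hk(1)])
  have Tm: "\<And>x y. x \<otimes>\<^bsub>T\<^esub> y = e (d x \<otimes>\<^bsub>C\<^esub> d y)" unfolding T_def by simp
  have hpow: "hk (b0 [^]\<^bsub>F\<^esub> k) = e (int k mod int N)" for k :: nat
  proof (induction k)
    case 0
    have "hk (b0 [^]\<^bsub>F\<^esub> (0::nat)) = \<one>\<^bsub>T\<^esub>" by simp
    thus ?case unfolding T_def by simp
  next
    case (Suc k)
    have "hk (b0 [^]\<^bsub>F\<^esub> Suc k) = hk (b0 [^]\<^bsub>F\<^esub> k) \<otimes>\<^bsub>T\<^esub> hk b0" using b0c by simp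
    also have "\<dots> = e ((int k mod int N + 1) mod int N)"
      unfolding Tm Suc hk(2)[rule_format, OF b0] Cm using N2 de by simp
    also have "(int k mod int N + 1) mod int N = int (Suc k) mod int N" by (simp add: mod_add_right_eq add.commute)
    finally show ?case .
  qed
  have injp: "inj_on (\<lambda>k. b0 [^]\<^bsub>F\<^esub> k) {0..<N}"
  proof (rule inj_onI)
    fix i j assume ij: "i \<in> {0..<N}" "j \<in> {0..<N}" "b0 [^]\<^bsub>F\<^esub> i = b0 [^]\<^bsub>F\<^esub> j"
    hence "hk (b0 [^]\<^bsub>F\<^esub> i) = hk (b0 [^]\<^bsub>F\<^esub> j)" by simp
    hence "e (int i mod int N) = e (int j mod int N)" using hpow[of i] hpow[of j] by simp
    moreover have "int i mod int N = int i" "int j mod int N = int j" using ij by auto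
    ultimately have "e (int i) = e (int j)" by simp
    moreover have "int i \<in> {0..<int N}" "int j \<in> {0..<int N}" using ij by auto
    ultimately have "int i = int j" using inj_onD[OF inje] by blast
    thus "i = j" by simp
  qed
  have "card ((\<lambda>k. b0 [^]\<^bsub>F\<^esub> k) ` {0..<N}) = N" using card_image[OF injp] by simp
  hence allp: "(\<lambda>k. b0 [^]\<^bsub>F\<^esub> k) ` {0..<N} = UNIV" by (intro card_subset_eq[OF fin]) (simp_all add: N_def)
  have pig: "group_hom F Q \<pi>" by (rule mla_hom_group_hom[OF Fm p_facts(1) hom])
  have pg: "group_hom K Q (\<lambda>x. Zc #>\<^bsub>K\<^esub> x)" by (rule mla_hom_group_hom[OF K p_facts(1) p_facts(2)])
  have "\<pi> b0 \<in> rcosets\<^bsub>K\<^esub> Zc" using surj b0c Q_carrier by auto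
  then obtain c where c: "c \<in> carrier K" "\<pi> b0 = Zc #>\<^bsub>K\<^esub> c" unfolding RCOSETS_def by auto
  have cyc: "\<exists>k::nat. Zc #>\<^bsub>K\<^esub> a = Zc #>\<^bsub>K\<^esub> c [^]\<^bsub>K\<^esub> k" if a: "a \<in> carrier K" for a
  proof -
    have "Zc #>\<^bsub>K\<^esub> a \<in> carrier Q" using a unfolding Q_carrier RCOSETS_def by auto
    then obtain x where x: "x \<in> carrier F" "Zc #>\<^bsub>K\<^esub> a = \<pi> x" using surj by auto
    have "x \<in> (\<lambda>k. b0 [^]\<^bsub>F\<^esub> k) ` {0..<N}" using allp by simp
    then obtain k :: nat where k: "x = b0 [^]\<^bsub>F\<^esub> k" by blast
    have "\<pi> x = (\<pi> b0) [^]\<^bsub>Q\<^esub> k" using group_hom.hom_nat_pow[OF pig b0c] k by simp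
    also have "\<dots> = Zc #>\<^bsub>K\<^esub> c [^]\<^bsub>K\<^esub> k" using group_hom.hom_nat_pow[OF pg c(1)] c(2) by simp
    finally have "\<pi> x = Zc #>\<^bsub>K\<^esub> c [^]\<^bsub>K\<^esub> k" .
    thus ?thesis using x(2) by (intro exI[of _ k]) simp
  qed
  show ?thesis by (rule cyclic_center[OF c(1) cyc])
qed



lemma lift:
  fixes K :: "'k mul_lie" and F :: "'a mul_lie" and B :: "'a set" and \<pi> :: "'a \<Rightarrow> 'k set"
  assumes K: "mult_lie_alg K"
    and free: "free_mla F B"
    and hom: "\<pi> \<in> mla_hom F (quot_mla K (mla_center K))"
    and surj: "\<pi> ` carrier F = carrier (quot_mla K (mla_center K))"
  shows "\<exists>\<phi> \<in> mla_hom F K. \<forall>x\<in>carrier F. mla_center K #>\<^bsub>K\<^esub> \<phi> x = \<pi> x"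
proof -
  interpret mla K by (rule mla.intro, rule K)
  have Fm: "mult_lie_alg F" using free free_mla by blast
  interpret Fm: mla F by (rule mla.intro, rule Fm)
  interpret Qm: mla Q by (rule mla.intro, rule p_facts(1))
  have Bc: "B \<subseteq> carrier F" using free unfolding free_mla_def by simp
  have pig: "group_hom F Q \<pi>" by (rule mla_hom_group_hom[OF Fm p_facts(1) hom])
  show ?thesis
  proof (cases "finite (UNIV :: 'a set)")
    case False
    define l where "l b = (SOME a. a \<in> \<pi> b)" for b
    have lb: "l b \<in> \<pi> b \<and> l b \<in> carrier K" if b: "b \<in> B" for b
    proof -
      have "\<pi> b \<in> rcosets\<^bsub>K\<^esub> Zc" using surj b Bc Q_carrier by auto
      then obtain c where c: "c \<in> carrier K" "\<pi> b = Zc #>\<^bsub>K\<^esub> c" unfolding RCOSETS_def by auto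
      have "c \<in> \<pi> b" using c rcos_self[OF c(1) Zc_subgroup] by simp
      hence "l b \<in> \<pi> b" unfolding l_def by (rule someI)
      moreover have "\<pi> b \<subseteq> carrier K" using c r_coset_subset_G[OF Zc_sub c(1)] by simp
      ultimately show ?thesis by blast
    qed
    have "\<exists>\<phi>\<in>mla_hom F K. \<forall>b\<in>B. \<phi> b = l b" by (rule lift_exists_inf[OF K free False]) (use lb in blast)
    then obtain \<phi> where phi: "\<phi> \<in> mla_hom F K" "\<forall>b\<in>B. \<phi> b = l b" by blast
    have "\<And>x. x \<in> carrier F \<Longrightarrow> mla_center K #>\<^bsub>K\<^esub> \<phi> x = \<pi> x"
      by (rule lift_unique[OF K free hom surj phi(1)]) (use phi(2) lb in simp)
    thus ?thesis using phi(1) by (intro bexI[of _ \<phi>]) auto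
  next
    case fin: True
    have const: "\<forall>x\<in>carrier F. \<pi> x = Zc"
    proof (cases "carrier K \<subseteq> Zc")
      case True
      show ?thesis
      proof
        fix x assume x: "x \<in> carrier F"
        have "\<pi> x \<in> rcosets\<^bsub>K\<^esub> Zc" using surj x Q_carrier by auto
        then obtain a where a: "a \<in> carrier K" "\<pi> x = Zc #>\<^bsub>K\<^esub> a" unfolding RCOSETS_def by auto
        thus "\<pi> x = Zc" using coset_join2[OF a(1) Zc_subgroup] True by auto
      qed
    next
      case False
      have triv: "\<forall>x\<in>carrier F. x = \<one>\<^bsub>F\<^esub>"
      proof (cases "B = {}")
        case True
        have h1: "(\<lambda>x. x) \<in> mla_hom F F" unfolding mla_hom_def hom_def by auto
        have h2: "(\<lambda>x. \<one>\<^bsub>F\<^esub>) \<in> mla_hom F F" unfolding mla_hom_def hom_def by auto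
        show ?thesis
        proof
          fix x assume x: "x \<in> carrier F"
          have "(\<lambda>x. x) x = (\<lambda>x. \<one>\<^bsub>F\<^esub>) x" by (rule free_unique[OF free Fm h1 h2]) (use True x in auto)
          thus "x = \<one>\<^bsub>F\<^esub>" by simp
        qed
      next
        case False
        then obtain b0 where b0: "b0 \<in> B" by blast
        have "card (UNIV :: 'a set) \<noteq> 0" using fin by simp
        moreover have "\<not> card (UNIV :: 'a set) \<ge> 2"
          using finite_cyclic[OF K free hom surj fin b0] \<open>\<not> carrier K \<subseteq> Zc\<close> by blast
        ultimately have "card (UNIV :: 'a set) = 1" by linarith
        then obtain u :: 'a where u: "UNIV = {u}" by (rule card_1_singletonE)
        show ?thesis
        proof
          fix x assume "x \<in> carrier F"
          have "x = u" "\<one>\<^bsub>F\<^esub> = u" using u by auto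
          thus "x = \<one>\<^bsub>F\<^esub>" by simp
        qed
      qed
      show ?thesis
      proof
        fix x assume x: "x \<in> carrier F"
        have "\<pi> x = \<pi> \<one>\<^bsub>F\<^esub>" using triv x by simp
        also have "\<dots> = \<one>\<^bsub>Q\<^esub>" using group_hom.hom_one[OF pig] by simp
        finally show "\<pi> x = Zc" using Q_one by simp
      qed
    qed
    have "(\<lambda>x. \<one>\<^bsub>K\<^esub>) \<in> mla_hom F K" unfolding mla_hom_def hom_def by auto
    moreover have "\<forall>x\<in>carrier F. mla_center K #>\<^bsub>K\<^esub> \<one>\<^bsub>K\<^esub> = \<pi> x" using const Zc_sub by simp
    ultimately show ?thesis by (intro bexI[of _ "\<lambda>x. \<one>\<^bsub>K\<^esub>"]) auto
  qed
qed



lemma r_coset_upd: "H #>\<^bsub>G\<lparr>carrier := Y\<rparr>\<^esub> a = H #>\<^bsub>G\<^esub> a"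
  by (simp add: r_coset_def)
lemma set_mult_upd: "A <#>\<^bsub>G\<lparr>carrier := Y\<rparr>\<^esub> B = A <#>\<^bsub>G\<^esub> B"
  by (simp add: set_mult_def)

lemma conj_group_hom:
  assumes "group G" "g \<in> carrier G"
  shows "group_hom G G (conjg G g)"
proof -
  interpret group G by (rule assms(1))
  have c: "\<And>z. z \<in> carrier G \<Longrightarrow> inv\<^bsub>G\<^esub> g \<otimes>\<^bsub>G\<^esub> (g \<otimes>\<^bsub>G\<^esub> z) = z" using assms(2) by (simp add: m_assoc[symmetric])
  show ?thesis
    by (intro group_hom.intro group_hom_axioms.intro assms(1))
       (auto simp: hom_def conjg_def m_assoc assms(2) c)
qed

theorem lemma4p13:
  fixes K :: "'k mul_lie" and F :: "'a mul_lie" and B :: "'a set"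
    and \<pi> :: "'a \<Rightarrow> 'k set"
  assumes K: "mult_lie_alg K"
    and free: "free_mla F B"
    and hom: "\<pi> \<in> mla_hom F (quot_mla K (mla_center K))"
    and surj: "\<pi> ` carrier F = carrier (quot_mla K (mla_center K))"
  shows "\<exists>\<Delta>. \<Delta> \<in> hom (schur_quot F {x \<in> carrier F. \<pi> x = mla_center K})
                     (K\<lparr>carrier := Mcomm K (carrier K) (carrier K)\<rparr>)
           \<and> \<Delta> ` carrier (schur_quot F {x \<in> carrier F. \<pi> x = mla_center K})
               = {y \<in> Mcomm K (carrier K) (carrier K). mla_center K #>\<^bsub>K\<^esub> y = mla_center K}
           \<and> (\<lambda>y. mla_center K #>\<^bsub>K\<^esub> y) ` Mcomm K (carrier K) (carrier K)
               = Mcomm (quot_mla K (mla_center K))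
                   (carrier (quot_mla K (mla_center K))) (carrier (quot_mla K (mla_center K)))"
proof -
  interpret mla K by (rule mla.intro, rule K)
  have Fm: "mult_lie_alg F" using free free_mla by blast
  interpret Fm: mla F by (rule mla.intro, rule Fm)
  interpret Qm: mla Q by (rule mla.intro, rule p_facts(1))
  obtain \<phi> where phi: "\<phi> \<in> mla_hom F K" and phiQ: "\<And>x. x \<in> carrier F \<Longrightarrow> Zc #>\<^bsub>K\<^esub> \<phi> x = \<pi> x"
    using lift[OF K free hom surj] by blast
  interpret ph: group_hom F K \<phi> by (rule mla_hom_group_hom[OF Fm K phi])
  have phis: "\<And>x y. x \<in> carrier F \<Longrightarrow> y \<in> carrier F \<Longrightarrow> \<phi> (lstar F x y) = lstar K (\<phi> x) (\<phi> y)"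
    using phi unfolding mla_hom_def by auto
  have pig: "group_hom F Q \<pi>" by (rule mla_hom_group_hom[OF Fm p_facts(1) hom])
  define R where "R = {x \<in> carrier F. \<pi> x = Zc}"
  define H where "H = Mcomm F R (carrier F)"
  define M where "M = Mcomm F (carrier F) (carrier F)"
  define MK where "MK = Mcomm K (carrier K) (carrier K)"
  have RF: "R \<subseteq> carrier F" unfolding R_def by auto
  have phiR: "\<phi> x \<in> Zc" if x: "x \<in> R" for x
  proof -
    have xc: "x \<in> carrier F" and eq: "\<pi> x = Zc" using x unfolding R_def by auto
    have "\<phi> x \<in> Zc #>\<^bsub>K\<^esub> \<phi> x" using rcos_self[OF ph.hom_closed[OF xc] Zc_subgroup] .
    thus ?thesis using phiQ[OF xc] eq by simp
  qed
  have Rker: "R = kernel F Q \<pi>" unfolding R_def kernel_def Q_one by simp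
  have Rn: "R \<lhd> F" unfolding Rker by (rule group_hom.normal_kernel[OF pig])
  define S where "S = {lstar F a b | a b. a \<in> R \<and> b \<in> carrier F} \<union> {gcomm F a b | a b. a \<in> R \<and> b \<in> carrier F}"
  have SF: "S \<subseteq> carrier F" unfolding S_def using RF by auto
  have HS: "H = generate F S" unfolding H_def Mcomm_def S_def by simp
  have Hsub: "subgroup H F" unfolding HS by (rule Fm.generate_is_subgroup[OF SF])
  have Hn: "H \<lhd> F"
  proof -
    have "\<forall>g\<in>carrier F. \<forall>h\<in>H. g \<otimes>\<^bsub>F\<^esub> h \<otimes>\<^bsub>F\<^esub> inv\<^bsub>F\<^esub> g \<in> H"
    proof (intro ballI)
      fix g h assume g: "g \<in> carrier F" and h: "h \<in> H"
      interpret cg: group_hom F F "conjg F g" by (rule conj_group_hom[OF Fm.grp g])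
      have cS: "conjg F g ` S \<subseteq> S"
      proof
        fix y assume "y \<in> conjg F g ` S"
        then obtain a b where ab: "a \<in> R" "b \<in> carrier F"
          and "y = conjg F g (lstar F a b) \<or> y = conjg F g (gcomm F a b)" unfolding S_def by blast
        moreover have ac: "a \<in> carrier F" using ab RF by auto
        moreover have "conjg F g a \<in> R"
          using normal.inv_op_closed2[OF Rn g ab(1)] unfolding conjg_def .
        moreover have "conjg F g (gcomm F a b) = gcomm F (conjg F g a) (conjg F g b)"
          unfolding gcomm_def using ac ab g by (simp add: cg.hom_mult cg.hom_inv)
        ultimately show "y \<in> S" unfolding S_def using Fm.star_conj[OF ac ab(2) g] ab g by auto
      qed
      have "conjg F g ` H = generate F (conjg F g ` S)" unfolding HS using cg.generate_img[OF SF] by simp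
      also have "\<dots> \<subseteq> H" unfolding HS by (rule Fm.mono_generate[OF cS])
      finally show "g \<otimes>\<^bsub>F\<^esub> h \<otimes>\<^bsub>F\<^esub> inv\<^bsub>F\<^esub> g \<in> H" using h unfolding conjg_def by blast
    qed
    thus ?thesis using Fm.normal_inv_iff Hsub by blast
  qed
  have Hc: "H \<subseteq> carrier F" using Hsub subgroup.subset by blast
  have phiH: "\<phi> h = \<one>\<^bsub>K\<^esub>" if h: "h \<in> H" for h
  proof -
    have "\<phi> ` S \<subseteq> {\<one>\<^bsub>K\<^esub>}"
    proof
      fix y assume "y \<in> \<phi> ` S"
      then obtain a b where ab: "a \<in> R" "b \<in> carrier F"
        and "y = \<phi> (lstar F a b) \<or> y = \<phi> (gcomm F a b)" unfolding S_def by blast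
      moreover have ac: "a \<in> carrier F" using ab RF by auto
      moreover have "\<phi> (gcomm F a b) = gcomm K (\<phi> a) (\<phi> b)"
        unfolding gcomm_def using ac ab by simp
      moreover have "gcomm K (\<phi> a) (\<phi> b) = \<one>\<^bsub>K\<^esub>"
      proof -
        have "gcomm K (\<phi> a) (\<phi> b) = gcomm K (\<phi> a \<otimes>\<^bsub>K\<^esub> \<one>\<^bsub>K\<^esub>) (\<one>\<^bsub>K\<^esub> \<otimes>\<^bsub>K\<^esub> \<phi> b)" using ac ab by simp
        also have "\<dots> = gcomm K (\<one>\<^bsub>K\<^esub> \<otimes>\<^bsub>K\<^esub> \<one>\<^bsub>K\<^esub>) (\<one>\<^bsub>K\<^esub> \<otimes>\<^bsub>K\<^esub> \<phi> b)"
          using ac ab phiR Zc_comm[of "\<phi> a" "\<one>\<^bsub>K\<^esub>"] Zc_reduce_gcomm[of "\<one>\<^bsub>K\<^esub>" "\<phi> b" "\<phi> a" "\<one>\<^bsub>K\<^esub>"]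
            subgroup.one_closed[OF Zc_subgroup] by simp
        also have "\<dots> = \<one>\<^bsub>K\<^esub>" unfolding gcomm_def using ab by simp
        finally show ?thesis .
      qed
      ultimately show "y \<in> {\<one>\<^bsub>K\<^esub>}" using phis phiR by auto
    qed
    hence "generate K (\<phi> ` S) \<subseteq> {\<one>\<^bsub>K\<^esub>}" using generate_subgroup_incl[OF _ triv_subgroup] by blast
    moreover have "\<phi> h \<in> generate K (\<phi> ` S)" using ph.generate_img[OF SF] h HS by blast
    ultimately show ?thesis by blast
  qed
  have phiM: "\<phi> ` M = MK"
  proof -
    have "\<phi> ` M = Mcomm K (\<phi> ` carrier F) (\<phi> ` carrier F)" unfolding M_def by (rule Mcomm_img[OF Fm K phi]) auto
    also have "\<dots> = MK"
    proof -
      have lift: "\<exists>x\<in>carrier F. \<exists>z\<in>Zc. a = z \<otimes>\<^bsub>K\<^esub> \<phi> x" if a: "a \<in> carrier K" for a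
      proof -
        have "Zc #>\<^bsub>K\<^esub> a \<in> carrier Q" using a unfolding Q_carrier RCOSETS_def by auto
        then obtain x where x: "x \<in> carrier F" "Zc #>\<^bsub>K\<^esub> a = \<pi> x" using surj by auto
        have "a \<in> Zc #>\<^bsub>K\<^esub> \<phi> x" using rcos_self[OF a Zc_subgroup] x phiQ[OF x(1)] by simp
        thus ?thesis using rcos_elem x(1) by blast
      qed
      have "{lstar K a b | a b. a \<in> \<phi> ` carrier F \<and> b \<in> \<phi> ` carrier F} \<union> {gcomm K a b | a b. a \<in> \<phi> ` carrier F \<and> b \<in> \<phi> ` carrier F}
          = {lstar K a b | a b. a \<in> carrier K \<and> b \<in> carrier K} \<union> {gcomm K a b | a b. a \<in> carrier K \<and> b \<in> carrier K}"
        (is "?L = ?R")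
      proof
        show "?L \<subseteq> ?R"
        proof
          fix y assume "y \<in> ?L"
          then obtain a b where ab: "a \<in> \<phi> ` carrier F" "b \<in> \<phi> ` carrier F" and d: "y = lstar K a b \<or> y = gcomm K a b" by blast
          have "a \<in> carrier K" "b \<in> carrier K" using ab by auto
          thus "y \<in> ?R" using d by blast
        qed
        show "?R \<subseteq> ?L"
        proof
          fix y assume "y \<in> ?R"
          then obtain a b where ab: "a \<in> carrier K" "b \<in> carrier K" and d: "y = lstar K a b \<or> y = gcomm K a b" by blast
          obtain x z where xz: "x \<in> carrier F" "z \<in> Zc" "a = z \<otimes>\<^bsub>K\<^esub> \<phi> x" using lift[OF ab(1)] by blast
          obtain x' z' where xz': "x' \<in> carrier F" "z' \<in> Zc" "b = z' \<otimes>\<^bsub>K\<^esub> \<phi> x'" using lift[OF ab(2)] by blast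
          have "lstar K a b = lstar K (\<phi> x) (\<phi> x')" using xz xz' Zc_reduce_star by simp
          moreover have "gcomm K a b = gcomm K (\<phi> x) (\<phi> x')" using xz xz' Zc_reduce_gcomm by simp
          ultimately show "y \<in> ?L" using d xz(1) xz'(1) by blast
        qed
      qed
      thus ?thesis unfolding Mcomm_def MK_def by simp
    qed
    finally show ?thesis .
  qed
  have "subgroup M F" unfolding M_def Mcomm_def by (rule Fm.generate_is_subgroup) auto
  hence Mc: "M \<subseteq> carrier F" using subgroup.subset by blast
  define N where "N = M \<inter> R"
  define Sch where "Sch = schur_quot F R"
  have Sch_car: "carrier Sch = (\<Union>a\<in>N. {H #>\<^bsub>F\<^esub> a})"
    unfolding Sch_def schur_quot_def FactGroup_def RCOSETS_def N_def M_def H_def by (simp add: r_coset_upd)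
  have Sch_mult: "\<And>U V. U \<otimes>\<^bsub>Sch\<^esub> V = U <#>\<^bsub>F\<^esub> V"
    unfolding Sch_def schur_quot_def FactGroup_def by (simp add: set_mult_upd)
  define \<Delta> where "\<Delta> C = \<phi> (SOME x. x \<in> C)" for C
  have DH: "\<Delta> (H #>\<^bsub>F\<^esub> x) = \<phi> x" if x: "x \<in> carrier F" for x
  proof -
    have "\<exists>y. y \<in> H #>\<^bsub>F\<^esub> x" using Fm.rcos_self[OF x Hsub] by blast
    hence "(SOME y. y \<in> H #>\<^bsub>F\<^esub> x) \<in> H #>\<^bsub>F\<^esub> x" by (rule someI_ex)
    then obtain h where h: "h \<in> H" "(SOME y. y \<in> H #>\<^bsub>F\<^esub> x) = h \<otimes>\<^bsub>F\<^esub> x" unfolding r_coset_def by blast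
    have hc: "h \<in> carrier F" using h Hc by auto
    show ?thesis unfolding \<Delta>_def h(2) using phiH[OF h(1)] hc x by simp
  qed
  have Nc: "N \<subseteq> carrier F" unfolding N_def using RF by auto
  have homD: "\<Delta> \<in> hom Sch (K\<lparr>carrier := MK\<rparr>)"
    unfolding hom_def
  proof (intro CollectI conjI ballI)
    show "\<Delta> \<in> carrier Sch \<rightarrow> carrier (K\<lparr>carrier := MK\<rparr>)"
    proof
      fix C assume "C \<in> carrier Sch"
      then obtain x where x: "x \<in> N" "C = H #>\<^bsub>F\<^esub> x" unfolding Sch_car by blast
      have "\<Delta> C = \<phi> x" using DH x Nc by auto
      moreover have "\<phi> x \<in> MK" using phiM x unfolding N_def by blast
      ultimately show "\<Delta> C \<in> carrier (K\<lparr>carrier := MK\<rparr>)" by simp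
    qed
  next
    fix C D assume "C \<in> carrier Sch" "D \<in> carrier Sch"
    then obtain x y where x: "x \<in> N" "C = H #>\<^bsub>F\<^esub> x" and y: "y \<in> N" "D = H #>\<^bsub>F\<^esub> y" unfolding Sch_car by blast
    have xc: "x \<in> carrier F" "y \<in> carrier F" using x y Nc by auto
    have "C \<otimes>\<^bsub>Sch\<^esub> D = H #>\<^bsub>F\<^esub> (x \<otimes>\<^bsub>F\<^esub> y)" unfolding Sch_mult x y using normal.rcos_sum[OF Hn xc] .
    thus "\<Delta> (C \<otimes>\<^bsub>Sch\<^esub> D) = \<Delta> C \<otimes>\<^bsub>K\<lparr>carrier := MK\<rparr>\<^esub> \<Delta> D" using DH xc x y by simp
  qed
  have imgD: "\<Delta> ` carrier Sch = {y \<in> MK. Zc #>\<^bsub>K\<^esub> y = Zc}"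
  proof
    show "\<Delta> ` carrier Sch \<subseteq> {y \<in> MK. Zc #>\<^bsub>K\<^esub> y = Zc}"
    proof
      fix y assume "y \<in> \<Delta> ` carrier Sch"
      then obtain x where x: "x \<in> N" "y = \<Delta> (H #>\<^bsub>F\<^esub> x)" unfolding Sch_car by blast
      have xc: "x \<in> carrier F" using x Nc by auto
      have "y = \<phi> x" using DH xc x by simp
      moreover have "\<phi> x \<in> MK" using phiM x unfolding N_def by blast
      moreover have "Zc #>\<^bsub>K\<^esub> \<phi> x = Zc" using phiQ[OF xc] x unfolding N_def R_def by simp
      ultimately show "y \<in> {y \<in> MK. Zc #>\<^bsub>K\<^esub> y = Zc}" by simp
    qed
    show "{y \<in> MK. Zc #>\<^bsub>K\<^esub> y = Zc} \<subseteq> \<Delta> ` carrier Sch"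
    proof
      fix y assume y: "y \<in> {y \<in> MK. Zc #>\<^bsub>K\<^esub> y = Zc}"
      then obtain x where x: "x \<in> M" "y = \<phi> x" using phiM by blast
      have xc: "x \<in> carrier F" using x Mc by auto
      have "\<pi> x = Zc" using phiQ[OF xc] x y by simp
      hence xN: "x \<in> N" unfolding N_def R_def using x xc by simp
      have "y = \<Delta> (H #>\<^bsub>F\<^esub> x)" using DH xc x by simp
      moreover have "H #>\<^bsub>F\<^esub> x \<in> carrier Sch" unfolding Sch_car using xN by blast
      ultimately show "y \<in> \<Delta> ` carrier Sch" by blast
    qed
  qed
  show ?thesis
    using homD imgD third unfolding Sch_def R_def MK_def by blast
qed


end
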